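(* The function $(S,h,h')\mapsto P(S,h|h')$ is piecewise continuous on $[0,\infty)\times[-1,1]\times[-1,1]$, and: 1) $P(S,h|h')=P(S,h'|h)=P(S,-h|-h')$ for a.e. $h,h'\in[-1,1]$ and all $S\ge0$; moreover $\int_0^\infty\int_{-1}^1P(S,h|h')\,dS\,dh=1$ for each $h'\in[-1,1]$ and $\int_0^\infty\int_{-1}^1P(S,h|h')\,dS\,dh'=1$ for each $h\in[-1,1]$. 2) $0\le P(S,h|h')\le\frac{6}{\pi^2S}\mathbf 1_{1+h'<2/S}$ for a.e. $h,h'\in(-1,1)$ with $|h'|\le h$ and all $S\ge4$; and $\int_{-1}^1\int_{-1}^1P(S,h|h')\,dh\,dh'\le\frac{48}{\pi^2S^3}$ for all $S\ge4$.
   Context: $P(S,h|h')$ is defined for $S\ge0$, $h,h'\in[-1,1]$ by $$P(S,h|h')=\frac{3}{\pi^2 S\eta}\Big((S\eta)\wedge(1-S)_+ +(\eta S-|1-S|)_+ +\big((S-\tfrac12S\eta)\wedge(1+\tfrac12S\eta)-(\tfrac12S+\tfrac12S\zeta)\vee1\big)_+ +\big((S-\tfrac12S\eta)\wedge1-(\tfrac12S+\tfrac12S\zeta)\vee(1-\tfrac12S\eta)\big)_+\Big),$$ with $\zeta=\tfrac12|h+h'|$, $\eta=\tfrac12|h-h'|$, $a\wedge b=\min(a,b)$, $a\vee b=\max(a,b)$, $z_+=\max(z,0)$. For $|h'|\le h<1$ this equals $\frac{3}{\pi^2}\big(1\wedge\frac{1}{h-h'}(\frac2S-(1+h'))_+\big)$.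 *)

theory Defs
  imports "HOL-Analysis.Analysis"
begin

definition pos_part :: "real \<Rightarrow> real" where
  "pos_part z = max z 0"

text \<open>The kernel P(S,h|h'), written Pk S h h', following the paper's formula literally
  (min = wedge, max = vee, pos_part = (_)_+). Division by zero follows Isabelle's convention.\<close>
definition Pk :: "real \<Rightarrow> real \<Rightarrow> real \<Rightarrow> real" where
  "Pk S h h' =
    (let \<zeta> = \<bar>h + h'\<bar> / 2; \<eta> = \<bar>h - h'\<bar> / 2 in
     3 / (pi^2 * S * \<eta>) *
      ( min (S * \<eta>) (pos_part (1 - S))
      + pos_part (\<eta> * S - \<bar>1 - S\<bar>)
      + pos_part (min (S - S * \<eta> / 2) (1 + S * \<eta> / 2) - max (S / 2 + S * \<zeta> / 2) 1)
      + pos_part (min (S - S * \<eta> / 2) 1 - max (S / 2 + S * \<zeta> / 2) (1 - S * \<eta> / 2))))"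

definition piecewise_continuous_on ::
  "('a::euclidean_space) set \<Rightarrow> ('a \<Rightarrow> real) \<Rightarrow> bool" where
  "piecewise_continuous_on D f \<longleftrightarrow>
     (\<exists>\<C>. finite \<C> \<and> D \<subseteq> \<Union>\<C> \<and>
        (\<forall>C\<in>\<C>. closed C \<and> negligible (frontier C) \<and> continuous_on (D \<inter> interior C) f))"

end

theory Submission
  imports Defs "HOL-Real_Asymp.Real_Asymp"
begin

definition Li2 :: "real \<Rightarrow> real" where "Li2 x = (\<Sum>n. (1 / (real n)^2) * x^n)"
definition D2 :: "real \<Rightarrow> real" where "D2 x = (\<Sum>n. (1 / real (Suc n)) * x^n)"

lemma summable_inv_sq: "summable (\<lambda>n. 1 / (real n)^2)"
proof -
  have "summable (\<lambda>n. 1 / (real (Suc n))^2)"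
    using inverse_squares_sums by (auto simp: sums_iff add.commute)
  then show ?thesis by (subst summable_Suc_iff[symmetric])
qed

lemma sum_inv_sq: "(\<Sum>n. 1 / (real n)^2) = pi^2/6"
proof -
  have "(\<lambda>n. 1 / (real (Suc n))^2) sums (pi^2/6)"
    using inverse_squares_sums by (simp add: add.commute)
  then have "(\<lambda>n. 1 / (real n)^2) sums (pi^2/6 + 1/(real 0)^2)"
    by (subst sums_Suc_iff[symmetric]) simp
  then show ?thesis by (simp add: sums_iff)
qed

lemma Li2_1: "Li2 1 = pi^2/6"
  unfolding Li2_def using sum_inv_sq by simp

lemma Li2_0: "Li2 0 = 0"
proof -
  have "(\<lambda>n. 1/(real n)^2 * (0::real)^n) = (\<lambda>n. 0)" by (auto simp: fun_eq_iff power_0_left)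
  then show ?thesis unfolding Li2_def by simp
qed

lemma Li2_summable: "\<bar>x\<bar> \<le> 1 \<Longrightarrow> summable (\<lambda>n. (1 / (real n)^2) * x^n)"
  by (rule summable_comparison_test[OF _ summable_inv_sq])
     (auto intro!: exI[of _ 0] divide_right_mono power_le_one simp: abs_mult power_abs)

lemma Li2_cont: "continuous_on {-1..1} Li2"
proof -
  have ul: "uniform_limit {-1..1} (\<lambda>n x. \<Sum>i<n. (1 / (real i)^2) * x^i) (\<lambda>x. suminf (\<lambda>i. (1 / (real i)^2) * x^i)) sequentially"
    by (rule Weierstrass_m_test[OF _ summable_inv_sq])
       (auto intro!: divide_right_mono power_le_one simp: abs_mult power_abs)
  show ?thesis unfolding Li2_def
    apply (rule uniform_limit_theorem[OF _ ul])
     apply (rule always_eventually)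
     apply (intro allI continuous_on_sum continuous_on_mult continuous_on_const continuous_on_power continuous_on_id)
    apply simp
    done
qed

lemma Li2_deriv:
  assumes "\<bar>x\<bar> < 1" shows "(Li2 has_field_derivative D2 x) (at x)"
proof -
  have "((\<lambda>z. \<Sum>n. (1 / (real n)^2) * z^n) has_field_derivative (\<Sum>n. diffs (\<lambda>n. 1 / (real n)^2) n * x^n)) (at x)"
    by (rule termdiffs_strong'[where K=1]) (use assms Li2_summable in auto)
  moreover have "diffs (\<lambda>n. 1 / (real n)^2) = (\<lambda>n. 1 / real (Suc n))"
    by (auto simp: diffs_def power2_eq_square simp del: of_nat_Suc)
  ultimately show ?thesis unfolding Li2_def D2_def by (simp add: fun_eq_iff)
qed

lemma D2_eq:
  assumes "\<bar>x\<bar> < 1" "x \<noteq> 0" shows "D2 x = - ln (1 - x) / x"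
proof -
  have "(\<lambda>n. - ((-(-x))^n) / of_nat n) sums ln (1 + (-x))"
    by (rule ln_series') (use assms in auto)
  then have "(\<lambda>n. x^n / real n) sums (- ln (1 - x))"
    using sums_minus by fastforce
  then have "(\<lambda>n. x^(Suc n) / real (Suc n)) sums (- ln (1 - x))"
    by (subst sums_Suc_iff) simp
  then have "(\<lambda>n. (1/x) * (x^(Suc n) / real (Suc n))) sums ((1/x) * (- ln (1 - x)))"
    by (rule sums_mult)
  moreover have "(\<lambda>n. (1/x) * (x^(Suc n) / real (Suc n))) = (\<lambda>n. (1 / real (Suc n)) * x^n)"
    using assms by (auto simp: fun_eq_iff field_simps simp del: of_nat_Suc)
  ultimately show ?thesis unfolding D2_def by (simp add: sums_iff)
qed

lemma phi_deriv:
  assumes q: "0 < q" "q < 1"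
  shows "((\<lambda>q. - Li2 (- q) + Li2 (1 / (1 + q)) + (ln (1 + q))^2 / 2 - ln (1 + q) * ln q)
           has_real_derivative 0) (at q)"
proof -
  have d1: "((\<lambda>q. Li2 (- q)) has_real_derivative D2 (- q) * (- 1)) (at q)"
    by (rule DERIV_chain2[OF Li2_deriv]) (use q in \<open>auto intro!: derivative_eq_intros\<close>)
  have d2: "((\<lambda>q. Li2 (1 / (1 + q))) has_real_derivative D2 (1 / (1 + q)) * (- 1 / (1 + q)^2)) (at q)"
    by (rule DERIV_chain2[OF Li2_deriv]) (use q in \<open>auto intro!: derivative_eq_intros simp: power2_eq_square field_simps\<close>)
  have e1: "D2 (- q) = ln (1 + q) / q" using q by (subst D2_eq) auto
  have "1 - 1 / (1 + q) = q / (1 + q)" using q by (simp add: field_simps)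
  then have e2: "D2 (1 / (1 + q)) = - (ln q - ln (1 + q)) * (1 + q)"
    using q by (subst D2_eq) (auto simp: ln_div field_simps)
  have d3: "((\<lambda>q. (ln (1 + q))^2 / 2) has_real_derivative ln (1 + q) / (1 + q)) (at q)"
    using q by (auto intro!: derivative_eq_intros simp: power2_eq_square) (simp add: field_simps)
  have d4: "((\<lambda>q. ln (1 + q) * ln q) has_real_derivative (1 / (1 + q)) * ln q + ln (1 + q) * (1 / q)) (at q)"
    using q by (auto intro!: derivative_eq_intros)
  have d: "((\<lambda>q. - Li2 (- q) + Li2 (1 / (1 + q)) + (ln (1 + q))^2 / 2 - ln (1 + q) * ln q)
           has_real_derivative (- (D2 (- q) * (- 1)) + D2 (1 / (1 + q)) * (- 1 / (1 + q)^2) + ln (1 + q) / (1 + q)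
              - ((1 / (1 + q)) * ln q + ln (1 + q) * (1 / q)))) (at q)"
    by (intro DERIV_add DERIV_diff DERIV_minus d1 d2 d3 d4)
  have "- (D2 (- q) * (- 1)) + D2 (1 / (1 + q)) * (- 1 / (1 + q)^2) + ln (1 + q) / (1 + q)
              - ((1 / (1 + q)) * ln q + ln (1 + q) * (1 / q)) = 0"
  proof -
    have t2: "D2 (1 / (1 + q)) * (- 1 / (1 + q)^2) = (ln q - ln (1 + q)) / (1 + q)"
    proof -
      have "D2 (1 / (1 + q)) * (- 1 / (1 + q)^2) = (ln q - ln (1 + q)) * ((1 + q) / ((1 + q) * (1 + q)))"
        unfolding e2 by (simp add: power2_eq_square) (use q in \<open>simp add: divide_simps\<close>)
      also have "(1 + q) / ((1 + q) * (1 + q)) = 1 / (1 + q)" using q by simp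
      finally show ?thesis by simp
    qed
    show ?thesis unfolding t2 e1 by (simp add: diff_divide_distrib)
  qed
  then show ?thesis using d by simp
qed

lemma phi_value:
  assumes p: "0 < p" "p \<le> 1"
  shows "- Li2 (- p) + Li2 (1 / (1 + p)) + (ln (1 + p))^2 / 2 - ln (1 + p) * ln p = pi^2/6"
proof -
  define \<phi> where "\<phi> q = - Li2 (- q) + Li2 (1 / (1 + q)) + (ln (1 + q))^2 / 2 - ln (1 + q) * ln q" for q
  have cont: "continuous_on {a..b} \<phi>" if "0 < a" "b \<le> 1" for a b
  proof -
    have c1: "continuous_on {a..b} (\<lambda>q. Li2 (- q))"
      by (rule continuous_on_compose2[OF Li2_cont]) (use that in \<open>auto intro!: continuous_intros\<close>)
    have c2: "continuous_on {a..b} (\<lambda>q. Li2 (1 / (1 + q)))"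
      by (rule continuous_on_compose2[OF Li2_cont]) (use that in \<open>auto intro!: continuous_intros simp: field_simps\<close>)
    show ?thesis unfolding \<phi>_def using that
      by (intro continuous_intros c1 c2) auto
  qed
  have const: "\<phi> q = \<phi> p" if "0 < q" "q \<le> p" for q
  proof (cases "q = p")
    case False
    then have "q < p" using that by simp
    have dd: "(\<phi> has_real_derivative 0) (at x)" if "q < x" "x < p" for x
      unfolding \<phi>_def by (rule phi_deriv) (use that p \<open>0 < q\<close> in auto)
    show ?thesis
      by (rule DERIV_isconst_end[OF \<open>q < p\<close> cont, symmetric]) (use that p dd in auto)
  qed simp
  have lim: "(\<phi> \<longlongrightarrow> pi^2/6) (at_right 0)"
  proof -
    have l1: "((\<lambda>q. Li2 (- q)) \<longlongrightarrow> Li2 0) (at_right 0)"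
      by (rule continuous_on_tendsto_compose[OF Li2_cont])
         (auto intro!: tendsto_eq_intros exI[of _ 1] simp: eventually_at_right_field)
    have ev2: "eventually (\<lambda>q. 1 / (1 + q) \<in> {-1..1::real}) (at_right 0)"
      unfolding eventually_at_right_field by (rule exI[of _ 1]) (auto simp: field_simps)
    have l2: "((\<lambda>q. Li2 (1 / (1 + q))) \<longlongrightarrow> Li2 1) (at_right 0)"
      by (rule continuous_on_tendsto_compose[OF Li2_cont _ _ ev2])
         (auto intro!: tendsto_eq_intros)
    have l3: "((\<lambda>q::real. (ln (1 + q))^2 / 2 - ln (1 + q) * ln q) \<longlongrightarrow> 0) (at_right 0)"
      by real_asymp
    have "(\<phi> \<longlongrightarrow> - Li2 0 + Li2 1 + 0) (at_right 0)"
      unfolding \<phi>_def using tendsto_add[OF tendsto_add[OF tendsto_minus[OF l1] l2] l3]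
      by (simp add: algebra_simps)
    then show ?thesis by (simp add: Li2_0 Li2_1)
  qed
  have "(\<phi> \<longlongrightarrow> \<phi> p) (at_right 0)"
    by (rule Lim_transform_eventually[OF tendsto_const])
       (use p in \<open>auto simp: eventually_at_right_field intro!: exI[of _ p] const[symmetric]\<close>)
  then have "\<phi> p = pi^2/6" using lim by (metis tendsto_unique trivial_limit_at_right_real)
  then show ?thesis by (simp add: \<phi>_def)
qed

definition ef :: "real \<Rightarrow> real \<Rightarrow> real" where "ef h a = \<bar>h - a\<bar> / 2"
definition zf :: "real \<Rightarrow> real \<Rightarrow> real" where "zf h a = \<bar>h + a\<bar> / 2"
definition mf :: "real \<Rightarrow> real \<Rightarrow> real" where "mf h a = 1 + zf h a - ef h a"
definition Mf :: "real \<Rightarrow> real \<Rightarrow> real" where "Mf h a = 1 + zf h a + ef h a"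
definition Kf :: "real \<Rightarrow> real \<Rightarrow> real" where "Kf a h = ln (Mf h a / mf h a) / ef h a"

lemma lin_deriv: "((\<lambda>h. (c - h) / d) has_real_derivative -1 / d) (at h)"
proof -
  have "((\<lambda>h. (c - h) / d) has_real_derivative (0 - 1) / d) (at h)"
    by (intro DERIV_cdivide DERIV_diff DERIV_const DERIV_ident)
  then show ?thesis by simp
qed

lemma div_helper1: fixes c d X :: real assumes "c \<noteq> 0"
  shows "2 * (- X / (d / c)) / c = 2 * X / (- d)"
  using assms by (simp add: divide_divide_eq_right)

lemma t1: fixes d X :: real 
  shows "(-X) / (d / 2) = 2 * X / (- d)"
  by (simp add: divide_divide_eq_right)
lemma t3: fixes d X :: real 
  shows "X / (d / 2) = 2 * X / d"
  by (simp add: divide_divide_eq_right)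
lemma t4: fixes a h X :: real 
  shows "(-X) / ((a - h) / 2) = 2 * X / (h - a)"
  using t1[of X "a - h"] by (simp only: minus_diff_eq)

lemma piece1:
  assumes a: "0 \<le> a" "a \<le> 1"
  shows "(Kf a has_integral (-2 * Li2 ((a - 1) / (1 + a)) - (-2 * Li2 ((a - (-a)) / (1 + a))))) {-a..1}"
proof -
  define \<Psi> where "\<Psi> h = -2 * Li2 ((a - h) / (1 + a))" for h
  define k where "k h = 2 * D2 ((a - h) / (1 + a)) / (1 + a)" for h
  have cont: "continuous_on {-a..1} \<Psi>"
    unfolding \<Psi>_def
    by (intro continuous_intros continuous_on_compose2[OF Li2_cont]) (use a in \<open>auto simp: field_simps\<close>)
  have der: "(\<Psi> has_vector_derivative k h) (at h)" if h: "h \<in> {-a<..<1}" for h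
  proof -
    have x: "\<bar>(a - h) / (1 + a)\<bar> < 1" using h a by (auto simp: abs_less_iff field_simps)
    have "((\<lambda>h. Li2 ((a - h) / (1 + a))) has_real_derivative D2 ((a - h) / (1 + a)) * (- 1 / (1 + a))) (at h)"
      by (rule DERIV_chain2[where f=Li2 and g="\<lambda>h. (a - h) / (1 + a)" and x=h, OF Li2_deriv[OF x]])
         (rule lin_deriv)
    then have "(\<Psi> has_real_derivative -2 * (D2 ((a - h) / (1 + a)) * (- 1 / (1 + a)))) (at h)"
      unfolding \<Psi>_def by (rule DERIV_cmult)
    then show ?thesis unfolding k_def has_real_derivative_iff_has_vector_derivative[symmetric]
      by simp
  qed
  have ftc: "(k has_integral (\<Psi> 1 - \<Psi> (-a))) {-a..1}"
    by (rule fundamental_theorem_of_calculus_interior[OF _ cont der]) (use a in auto)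
  have eq: "Kf a h = k h" if h: "h \<in> {-a..1} - {a, 1, -a}" for h
  proof -
    have hh: "-a < h" "h < 1" "h \<noteq> a" using h by auto
    have x: "\<bar>(a - h) / (1 + a)\<bar> < 1" using hh a by (auto simp: abs_less_iff field_simps)
    have x0: "(a - h) / (1 + a) \<noteq> 0" using hh a by auto
    have onem: "1 - (a - h) / (1 + a) = (1 + h) / (1 + a)" using a by (simp add: field_simps)
    have kh: "k h = 2 * ln ((1 + h) / (1 + a)) / (h - a)"
    proof -
      have "1 + a \<noteq> 0" using a by simp
      from div_helper1[OF this, of "ln ((1 + h) / (1 + a))" "a - h"] show ?thesis
        unfolding k_def D2_eq[OF x x0] onem by (simp only: minus_diff_eq)
    qed
    have z: "zf h a = (h + a) / 2" using hh unfolding zf_def by auto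
    show ?thesis
    proof (cases "a < h")
      case True
      have e: "ef h a = (h - a) / 2" using True unfolding ef_def by simp
      have M: "Mf h a = 1 + h" using True unfolding Mf_def ef_def z by simp (simp add: field_simps)
      have m: "mf h a = 1 + a" using True unfolding mf_def ef_def z by simp (simp add: field_simps)
      show ?thesis unfolding Kf_def kh e M m by (rule t3)
    next
      case False
      then have lt: "h < a" using hh by simp
      have e: "ef h a = (a - h) / 2" using lt unfolding ef_def by simp
      have M: "Mf h a = 1 + a" using lt unfolding Mf_def ef_def z by simp (simp add: field_simps)
      have m: "mf h a = 1 + h" using lt unfolding mf_def ef_def z by simp (simp add: field_simps)
      have l: "ln ((1 + a) / (1 + h)) = - ln ((1 + h) / (1 + a))"
        using hh a by (simp add: ln_div)
      show ?thesis unfolding Kf_def kh e M m l by (rule t4)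
    qed
  qed
  have "(Kf a has_integral (\<Psi> 1 - \<Psi> (-a))) {-a..1}"
    by (rule has_integral_spike_finite[where S="{a, 1, -a}", OF _ eq ftc]) auto
  then show ?thesis unfolding \<Psi>_def by simp
qed

lemma alg2: fixes A B C L :: real
  assumes "A \<noteq> 0" "B \<noteq> 0" "C \<noteq> 0" "C = A - B"
  shows "- (2 * L * (- 1 / B) / (A / B)) - 2 * ((L * A / C) * (- B / (A * A))) = 2 * L / C"
proof -
  have t1: "- (2 * L * (- 1 / B) / (A / B)) = 2 * L / A" using assms by (simp add: field_simps)
  have t2: "- 2 * ((L * A / C) * (- B / (A * A))) = 2 * L * B / (C * A)" using assms(1,3) by (simp add: field_simps)
  have t3: "2 * L / A + 2 * L * B / (C * A) = 2 * L * (C + B) / (C * A)" using assms(1,3) by (simp add: field_simps)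
  have CB: "C + B = A" using assms by simp
  have t4: "2 * L * (C + B) / (C * A) = 2 * L / C" unfolding CB using assms by simp
  show ?thesis using t1 t2 t3 t4 by linarith
qed

lemma alg2': fixes A B C L :: real
  assumes "A \<noteq> 0" "B \<noteq> 0" "C \<noteq> 0" "C = A - B"
  shows "- (of_nat 2 * ((inverse (A / B) * (- 1 / B)) * L ^ (2 - Suc 0))) - 2 * ((L * A / C) * (- B / (A * A))) = 2 * L / C"
proof -
  have "of_nat 2 * ((inverse (A / B) * (- 1 / B)) * L ^ (2 - Suc 0)) = 2 * L * (- 1 / B) / (A / B)"
    by (simp add: inverse_eq_divide)
  then show ?thesis using alg2[OF assms] by simp
qed

lemma piece2:
  assumes a: "0 \<le> a" "a < 1"
  shows "(Kf a has_integral
     ((- ((ln ((1 - (-a)) / (1 - a)))^2) - 2 * Li2 ((a - (-a)) / (1 - (-a))))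
    - (- ((ln ((1 - (-1)) / (1 - a)))^2) - 2 * Li2 ((a - (-1)) / (1 - (-1)))))) {-1..-a}"
proof -
  define \<Psi> where "\<Psi> h = - ((ln ((1 - h) / (1 - a)))^2) - 2 * Li2 ((a - h) / (1 - h))" for h
  define k where "k h = - (of_nat 2 * ((inverse ((1 - h) / (1 - a)) * (- 1 / (1 - a))) * (ln ((1 - h) / (1 - a))) ^ (2 - Suc 0)))
     - 2 * (D2 ((a - h) / (1 - h)) * (((- 1) * (1 - h) - (a - h) * (- 1)) / ((1 - h) * (1 - h))))" for h
  have cont: "continuous_on {-1..-a} \<Psi>"
    unfolding \<Psi>_def
    by (intro continuous_intros continuous_on_compose2[OF Li2_cont]) (use a in \<open>auto simp: field_simps\<close>)
  have der: "(\<Psi> has_vector_derivative k h) (at h)" if h: "h \<in> {-1<..<-a}" for h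
  proof -
    have h1: "1 - h \<noteq> 0" "0 < (1 - h) / (1 - a)" using h a by auto
    have x: "\<bar>(a - h) / (1 - h)\<bar> < 1" using h a by (auto simp: abs_less_iff field_simps)
    have dv: "((\<lambda>h. (1 - h) / (1 - a)) has_real_derivative -1 / (1 - a)) (at h)" by (rule lin_deriv)
    have dln: "((\<lambda>h. ln ((1 - h) / (1 - a))) has_real_derivative inverse ((1 - h) / (1 - a)) * (-1 / (1 - a))) (at h)"
      by (rule DERIV_chain2[where f=ln, OF DERIV_ln[OF h1(2)] dv])
    have dsq: "((\<lambda>h. (ln ((1 - h) / (1 - a)))^2) has_real_derivative
        of_nat 2 * ((inverse ((1 - h) / (1 - a)) * (-1 / (1 - a))) * (ln ((1 - h) / (1 - a))) ^ (2 - Suc 0))) (at h)"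
      by (rule DERIV_power[OF dln])
    have dx: "((\<lambda>h. (a - h) / (1 - h)) has_real_derivative
        ((- 1) * (1 - h) - (a - h) * (- 1)) / ((1 - h) * (1 - h))) (at h)"
      by (rule DERIV_divide) (use h1 in \<open>auto intro!: derivative_eq_intros\<close>)
    have dL: "((\<lambda>h. Li2 ((a - h) / (1 - h))) has_real_derivative
        D2 ((a - h) / (1 - h)) * (((- 1) * (1 - h) - (a - h) * (- 1)) / ((1 - h) * (1 - h)))) (at h)"
      by (rule DERIV_chain2[where f=Li2, OF Li2_deriv[OF x] dx])
    have "(\<Psi> has_real_derivative k h) (at h)"
      unfolding \<Psi>_def k_def by (rule DERIV_diff[OF DERIV_minus[OF dsq] DERIV_cmult[OF dL, of 2]])
    then show ?thesis unfolding has_real_derivative_iff_has_vector_derivative[symmetric] .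
  qed
  have ftc: "(k has_integral (\<Psi> (-a) - \<Psi> (-1))) {-1..-a}"
    by (rule fundamental_theorem_of_calculus_interior[OF _ cont der]) (use a in auto)
  have eq: "Kf a h = k h" if h: "h \<in> {-1..-a} - {-1, -a}" for h
  proof -
    have hh: "-1 < h" "h < -a" using h by auto
    have x: "\<bar>(a - h) / (1 - h)\<bar> < 1" using hh a by (auto simp: abs_less_iff field_simps)
    have x0: "(a - h) / (1 - h) \<noteq> 0" using hh a by auto
    define L where "L = ln ((1 - h) / (1 - a))"
    have onem: "1 - (a - h) / (1 - h) = (1 - a) / (1 - h)" using hh a by (simp add: field_simps diff_divide_distrib[symmetric] add_divide_distrib[symmetric])
    have lnm: "ln ((1 - a) / (1 - h)) = - L" unfolding L_def using hh a by (simp add: ln_div)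
    have D: "D2 ((a - h) / (1 - h)) = L * (1 - h) / (a - h)"
      unfolding D2_eq[OF x x0] onem lnm using hh a by simp
    have kh: "k h = 2 * L / (a - h)"
    proof -
      have num: "((- 1) * (1 - h) - (a - h) * (- 1)) = - (1 - a)" by simp
      show ?thesis unfolding k_def D num L_def[symmetric]
        by (rule alg2') (use hh a in auto)
    qed
    have z: "zf h a = - (h + a) / 2" using hh unfolding zf_def by auto
    have e: "ef h a = (a - h) / 2" using hh a unfolding ef_def by simp
    have M: "Mf h a = 1 - h" using hh a unfolding Mf_def ef_def z by simp (simp add: field_simps)
    have m: "mf h a = 1 - a" using hh a unfolding mf_def ef_def z by simp (simp add: field_simps)
    show ?thesis unfolding Kf_def kh e M m L_def[symmetric] by (rule t3)
  qed
  have "(Kf a has_integral (\<Psi> (-a) - \<Psi> (-1))) {-1..-a}"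
    by (rule has_integral_spike_finite[where S="{-1, -a}", OF _ eq ftc]) auto
  then show ?thesis unfolding \<Psi>_def by simp
qed

lemma Kf_neg: "Kf (-a) (-h) = Kf a h"
proof -
  have "\<bar>-h - -a\<bar> = \<bar>h - a\<bar>" "\<bar>-h + -a\<bar> = \<bar>h + a\<bar>" by linarith+
  then show ?thesis unfolding Kf_def Mf_def mf_def ef_def zf_def by simp
qed

lemma outer_pos:
  assumes a: "0 \<le> a" "a \<le> 1"
  shows "(Kf a has_integral pi^2/3) {-1..1}"
proof (cases "a = 1")
  case True
  have "(Kf 1 has_integral (-2 * Li2 ((1 - 1) / (1 + 1)) - (-2 * Li2 ((1 - (-1)) / (1 + 1))))) {-1..1}"
    using piece1[of 1] by simp
  then show ?thesis using True by (simp add: Li2_0 Li2_1)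
next
  case False
  then have a1: "a < 1" using a by simp
  define p where "p = (1 - a) / (1 + a)"
  have p0: "0 < p" and p1: "p \<le> 1" using a a1 unfolding p_def by (auto simp: field_simps)
  have f1: "(1 - (-a)) / (1 - a) = 1 / p" unfolding p_def using a a1 by (simp add: field_simps)
  have "a * a \<le> 1 * a" by (rule mult_right_mono) (use a a1 in auto)
  then have aa: "1 - a * a \<noteq> 0" using a1 by simp
  have f2: "(1 - (-1)) / (1 - a) = (1 + p) / p" unfolding p_def using a a1 aa by (simp add: field_simps)
  have f3: "(a - (-1)) / (1 - (-1)) = 1 / (1 + p)" unfolding p_def using a a1 by (simp add: field_simps)
  have f4: "(a - 1) / (1 + a) = - p" unfolding p_def using a a1 by (simp add: field_simps)
  have f5: "(a - (-a)) / (1 - (-a)) = (a - (-a)) / (1 + a)" by simp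
  have l1: "ln (1 / p) = - ln p" using p0 by (simp add: ln_div)
  have l2: "ln ((1 + p) / p) = ln (1 + p) - ln p" using p0 by (simp add: ln_div)
  have i: "(Kf a has_integral
     (((- ((ln ((1 - (-a)) / (1 - a)))^2) - 2 * Li2 ((a - (-a)) / (1 - (-a))))
    - (- ((ln ((1 - (-1)) / (1 - a)))^2) - 2 * Li2 ((a - (-1)) / (1 - (-1)))))
     + (-2 * Li2 ((a - 1) / (1 + a)) - (-2 * Li2 ((a - (-a)) / (1 + a)))))) {-1..1}"
    by (rule has_integral_combine[OF _ _ piece2[OF a(1) a1] piece1[OF a]]) (use a in auto)
  have "(((- ((ln ((1 - (-a)) / (1 - a)))^2) - 2 * Li2 ((a - (-a)) / (1 - (-a))))
    - (- ((ln ((1 - (-1)) / (1 - a)))^2) - 2 * Li2 ((a - (-1)) / (1 - (-1)))))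
     + (-2 * Li2 ((a - 1) / (1 + a)) - (-2 * Li2 ((a - (-a)) / (1 + a)))))
     = 2 * (- Li2 (- p) + Li2 (1 / (1 + p)) + (ln (1 + p))^2 / 2 - ln (1 + p) * ln p)"
    unfolding f1 f2 f3 f4 f5 l1 l2 by (simp add: power2_eq_square algebra_simps)
  also have "\<dots> = pi^2/3" using phi_value[OF p0 p1] by simp
  finally have eqv: "(((- ((ln ((1 - (-a)) / (1 - a)))^2) - 2 * Li2 ((a - (-a)) / (1 - (-a))))
    - (- ((ln ((1 - (-1)) / (1 - a)))^2) - 2 * Li2 ((a - (-1)) / (1 - (-1)))))
     + (-2 * Li2 ((a - 1) / (1 + a)) - (-2 * Li2 ((a - (-a)) / (1 + a))))) = pi^2/3" .
  show ?thesis using i by (simp only: eqv)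
qed

lemma outer:
  assumes a: "-1 \<le> a" "a \<le> 1"
  shows "(Kf a has_integral pi^2/3) {-1..1}"
proof (cases "0 \<le> a")
  case True
  then show ?thesis using outer_pos a by simp
next
  case False
  have "(Kf (-a) has_integral pi^2/3) {-1..1}" using outer_pos[of "-a"] a False by simp
  then have "((\<lambda>x. Kf (-a) (-x)) has_integral pi^2/3) {-1..- (-1)}"
    using has_integral_reflect_real[where f="Kf (-a)" and i="pi^2/3" and a="-1" and b=1] by simp
  then show ?thesis unfolding Kf_neg by simp
qed

lemma N_closed:
  fixes S E Z :: real
  assumes "0 < S" "0 \<le> E" "0 \<le> Z" "E + Z \<le> S"
  shows "min E (pos_part (1 - S)) + pos_part (E - \<bar>1 - S\<bar>) + pos_part (min (S - E/2) (1 + E/2) - max (S/2 + Z/2) 1) + pos_part (min (S - E/2) 1 - max (S/2 + Z/2) (1 - E/2)) = pos_part (1 - (S + Z - E)/2) - pos_part (1 - (S+Z+E)/2)"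
  using assms unfolding pos_part_def min_def max_def apply (simp split: if_splits abs_split)
  apply (intro conjI impI)
  apply (simp_all add: field_simps)
  done

lemma ez_le: "\<bar>h\<bar> \<le> 1 \<Longrightarrow> \<bar>a\<bar> \<le> 1 \<Longrightarrow> ef h a + zf h a \<le> 1"
  unfolding ef_def zf_def by (auto simp: abs_if field_simps split: if_splits)

lemma ef_nonneg: "0 \<le> ef h a" unfolding ef_def by simp
lemma zf_nonneg: "0 \<le> zf h a" unfolding zf_def by simp

lemma Pk_closed:
  assumes S: "0 < S" and h: "\<bar>h\<bar> \<le> 1" and a: "\<bar>a\<bar> \<le> 1"
  shows "Pk S h a = 3 / (pi^2 * S * ef h a) * (pos_part (1 - S * mf h a / 2) - pos_part (1 - S * Mf h a / 2))"
proof -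
  define e where "e = ef h a"
  define z where "z = zf h a"
  have e0: "0 \<le> e" "0 \<le> z" unfolding e_def z_def by (auto simp: ef_nonneg zf_nonneg)
  have ez: "S * e + S * z \<le> S" using ez_le[OF h a] S unfolding e_def z_def
    by (metis distrib_left mult.right_neutral mult_left_mono less_eq_real_def)
  have N: "min (S * e) (pos_part (1 - S)) + pos_part (S * e - \<bar>1 - S\<bar>) + pos_part (min (S - S * e/2) (1 + S * e/2) - max (S/2 + S * z/2) 1) + pos_part (min (S - S * e/2) 1 - max (S/2 + S * z/2) (1 - S * e/2)) = pos_part (1 - (S + S * z - S * e)/2) - pos_part (1 - (S + S * z + S * e)/2)"
    by (rule N_closed) (use S e0 ez in auto)
  have r1: "(S + S * z - S * e)/2 = S * mf h a / 2" unfolding mf_def e_def z_def by (simp add: algebra_simps)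
  have r2: "(S + S * z + S * e)/2 = S * Mf h a / 2" unfolding Mf_def e_def z_def by (simp add: algebra_simps)
  have "Pk S h a = 3 / (pi^2 * S * e) * (min (S * e) (pos_part (1 - S)) + pos_part (S * e - \<bar>1 - S\<bar>) + pos_part (min (S - S * e/2) (1 + S * e/2) - max (S/2 + S * z/2) 1) + pos_part (min (S - S * e/2) 1 - max (S/2 + S * z/2) (1 - S * e/2)))"
    unfolding Pk_def Let_def e_def z_def ef_def zf_def by (simp add: mult.commute)
  also have "\<dots> = 3 / (pi^2 * S * e) * (pos_part (1 - (S + S * z - S * e)/2) - pos_part (1 - (S + S * z + S * e)/2))"
    by (simp only: N)
  also have "\<dots> = 3 / (pi^2 * S * e) * (pos_part (1 - S * mf h a / 2) - pos_part (1 - S * Mf h a / 2))"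
    by (simp only: r1 r2)
  finally show ?thesis unfolding e_def .
qed

lemma mf_le_Mf: "mf h a \<le> Mf h a" unfolding mf_def Mf_def using ef_nonneg[of h a] by simp

lemma mf_nonneg: "\<bar>h\<bar> \<le> 1 \<Longrightarrow> \<bar>a\<bar> \<le> 1 \<Longrightarrow> 0 \<le> mf h a"
  unfolding mf_def ef_def zf_def by (auto simp: abs_if field_simps split: if_splits)

lemma Mf_ge1: "1 \<le> Mf h a" unfolding Mf_def using ef_nonneg[of h a] zf_nonneg[of h a] by simp

lemma Mf_mf: "Mf h a = mf h a + 2 * ef h a" unfolding Mf_def mf_def by simp

lemma pos_part_mono: "x \<le> y \<Longrightarrow> pos_part x \<le> pos_part y" unfolding pos_part_def by simp
lemma pos_part_nonneg: "0 \<le> pos_part x" unfolding pos_part_def by simp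

lemma Pk_zero_S: "Pk 0 h a = 0" unfolding Pk_def Let_def by simp

lemma Pk_nonneg:
  assumes S: "0 \<le> S" and h: "\<bar>h\<bar> \<le> 1" and a: "\<bar>a\<bar> \<le> 1"
  shows "0 \<le> Pk S h a"
proof (cases "S = 0")
  case True then show ?thesis by (simp add: Pk_zero_S)
next
  case False
  then have S': "0 < S" using S by simp
  have "pos_part (1 - S * Mf h a / 2) \<le> pos_part (1 - S * mf h a / 2)"
    by (rule pos_part_mono) (use S mf_le_Mf[of h a] in \<open>auto intro!: mult_left_mono divide_right_mono\<close>)
  then show ?thesis unfolding Pk_closed[OF S' h a] using S' ef_nonneg[of h a]
    by (intro mult_nonneg_nonneg) auto
qed

lemma Pk_bound4:
  assumes S: "4 \<le> S" and h: "\<bar>h\<bar> \<le> 1" and a: "\<bar>a\<bar> \<le> 1"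
  shows "Pk S h a \<le> 6 / (pi^2 * S) * (if mf h a < 2 / S then 1 else 0)"
proof -
  have S': "0 < S" using S by simp
  define e where "e = ef h a"
  have e0: "0 \<le> e" unfolding e_def by (rule ef_nonneg)
  have eq: "Pk S h a = 3 / (pi^2 * S * e) * pos_part (1 - S * mf h a / 2)"
  proof -
    have "S * Mf h a \<ge> 4 * 1" using Mf_ge1[of h a] S by (intro mult_mono) auto
    then have "pos_part (1 - S * Mf h a / 2) = 0" unfolding pos_part_def by simp
    then show ?thesis unfolding Pk_closed[OF S' h a] e_def by simp
  qed
  show ?thesis
  proof (cases "e = 0")
    case True then show ?thesis unfolding eq using S' by simp
  next
    case False
    then have e1: "0 < e" using e0 by simp
    have e2: "e \<le> 1" using ez_le[OF h a] zf_nonneg[of h a] unfolding e_def by simp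
    have mz: "1 - e \<le> mf h a" unfolding mf_def e_def using zf_nonneg[of h a] by simp
    show ?thesis
    proof (cases "mf h a < 2 / S")
      case True
      have "S * (1 - e) \<le> S * mf h a" using mz S' by (intro mult_left_mono) auto
      moreover have "4 * (1 - e) \<le> S * (1 - e)" using S e2 by (intro mult_right_mono) auto
      ultimately have "pos_part (1 - S * mf h a / 2) \<le> 2 * e" unfolding pos_part_def using e1 by simp
      then have "3 / (pi^2 * S * e) * pos_part (1 - S * mf h a / 2) \<le> 3 / (pi^2 * S * e) * (2 * e)"
        using S' e1 by (intro mult_left_mono) auto
      also have "\<dots> = 6 / (pi^2 * S)" using e1 by simp
      finally show ?thesis unfolding eq using True by simp
    next
      case False
      then have "2 \<le> S * mf h a" using S' by (simp add: field_simps)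
      then have "pos_part (1 - S * mf h a / 2) = 0" unfolding pos_part_def by simp
      then show ?thesis unfolding eq using False by simp
    qed
  qed
qed

lemma Pk_measurable [measurable]:
  assumes [measurable]: "f \<in> borel_measurable M" "g \<in> borel_measurable M" "k \<in> borel_measurable M"
  shows "(\<lambda>x. Pk (f x) (g x) (k x)) \<in> borel_measurable M"
  unfolding Pk_def Let_def pos_part_def by measurable

lemma inner:
  assumes h: "\<bar>h\<bar> \<le> 1" and a: "\<bar>a\<bar> \<le> 1" and e: "0 < ef h a" and m: "0 < mf h a"
  shows "((\<lambda>S. Pk S h a) has_integral (3 / pi^2) * Kf a h) {0..}"
proof -
  define e where "e = ef h a"
  define mm where "mm = mf h a"
  define MM where "MM = Mf h a"
  have e0: "0 < e" and m0: "0 < mm" using e m unfolding e_def mm_def by auto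
  have MMe: "MM = mm + 2 * e" unfolding MM_def mm_def e_def by (rule Mf_mf)
  have M0: "0 < MM" "mm < MM" using MMe e0 m0 by auto
  define T1 where "T1 = 2 / MM"
  define T2 where "T2 = 2 / mm"
  have T12: "0 < T1" "T1 \<le> T2" unfolding T1_def T2_def using M0 m0 by (auto simp: field_simps)
  have cl: "Pk S h a = 3 / (pi^2 * S * e) * (pos_part (1 - S * mm / 2) - pos_part (1 - S * MM / 2))"
    if "0 < S" for S unfolding e_def mm_def MM_def by (rule Pk_closed[OF that h a])
  have i1: "((\<lambda>S. Pk S h a) has_integral T1 * (3 / pi^2)) {0..T1}"
  proof -
    have c: "((\<lambda>S. 3 / pi^2) has_integral T1 * (3 / pi^2)) {0..T1}"
      using has_integral_const_real[of "3 / pi^2" 0 T1] T12 by simp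
    show ?thesis
    proof (rule has_integral_spike_finite[where S="{0}", OF _ _ c])
      fix S assume S: "S \<in> {0..T1} - {0}"
      then have S0: "0 < S" "S \<le> T1" by auto
      have "S * MM \<le> 2" using S0 M0 unfolding T1_def by (simp add: field_simps)
      moreover have "S * mm \<le> S * MM" using S0 M0 by (intro mult_left_mono) auto
      ultimately have "pos_part (1 - S * mm / 2) - pos_part (1 - S * MM / 2) = S * e"
        unfolding pos_part_def MMe by (simp add: algebra_simps)
      then show "Pk S h a = 3 / pi^2" using cl[OF S0(1)] S0 e0 by simp
    qed simp
  qed
  define G where "G S = 3 / (pi^2 * e) * (ln S - mm * S / 2)" for S
  define g where "g S = 3 / (pi^2 * e) * (1 / S - mm / 2)" for S
  have i2: "((\<lambda>S. Pk S h a) has_integral G T2 - G T1) {T1..T2}"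
  proof -
    have ftc: "(g has_integral G T2 - G T1) {T1..T2}"
    proof (rule fundamental_theorem_of_calculus[OF T12(2)])
      fix S assume S: "S \<in> {T1..T2}"
      then have S0: "0 < S" using T12 by auto
      have "(G has_real_derivative 3 / (pi^2 * e) * (inverse S - mm * 1 / 2)) (at S)"
        unfolding G_def by (intro DERIV_cmult DERIV_diff DERIV_ln DERIV_cdivide DERIV_ident S0)
      then have "(G has_real_derivative 3 / (pi^2 * e) * (inverse S - mm * 1 / 2)) (at S within {T1..T2})"
        by (rule has_field_derivative_at_within)
      then show "(G has_vector_derivative g S) (at S within {T1..T2})"
        unfolding g_def has_real_derivative_iff_has_vector_derivative[symmetric]
        by (simp add: inverse_eq_divide)
    qed
    show ?thesis
    proof (rule has_integral_spike_finite[where S="{}", OF _ _ ftc])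
      fix S assume S: "S \<in> {T1..T2} - {}"
      then have S0: "0 < S" "T1 \<le> S" "S \<le> T2" using T12 by auto
      have "2 \<le> S * MM" using S0 M0 unfolding T1_def by (simp add: field_simps)
      moreover have "S * mm \<le> 2" using S0 m0 unfolding T2_def by (simp add: field_simps)
      ultimately have "pos_part (1 - S * mm / 2) - pos_part (1 - S * MM / 2) = 1 - S * mm / 2"
        unfolding pos_part_def by simp
      then show "Pk S h a = g S" using cl[OF S0(1)] S0 e0 unfolding g_def by (simp add: field_simps)
    qed simp
  qed
  have i12: "((\<lambda>S. Pk S h a) has_integral T1 * (3 / pi^2) + (G T2 - G T1)) {0..T2}"
    by (rule has_integral_combine[OF _ _ i1 i2]) (use T12 in auto)
  have val: "T1 * (3 / pi^2) + (G T2 - G T1) = (3 / pi^2) * Kf a h"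
  proof -
    have K: "Kf a h = ln (MM / mm) / e" unfolding Kf_def MM_def mm_def e_def ..
    have lnT: "ln T2 - ln T1 = ln (MM / mm)" unfolding T1_def T2_def using M0 m0 by (simp add: ln_div)
    have gen: "c * (A - mm * T2 / 2) - c * (B - mm * T1 / 2) = c * ((A - B) - mm * (T2 - T1) / 2)" for c A B :: real
      by (simp add: field_simps)
    have "G T2 - G T1 = 3 / (pi^2 * e) * ((ln T2 - ln T1) - mm * (T2 - T1) / 2)"
      unfolding G_def by (rule gen)
    also have "\<dots> = 3 / (pi^2 * e) * (ln (MM / mm) - mm * (T2 - T1) / 2)" unfolding lnT ..
    also have "mm * (T2 - T1) / 2 = 2 * e / MM"
    proof -
      have "mm * (T2 - T1) / 2 = (MM - mm) / MM" unfolding T1_def T2_def using m0 M0 by (simp add: field_simps)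
      also have "MM - mm = 2 * e" using MMe by simp
      finally show ?thesis .
    qed
    finally have "G T2 - G T1 = 3 / (pi^2 * e) * ln (MM / mm) - 3 / (pi^2 * e) * (2 * e / MM)"
      by (simp add: algebra_simps)
    moreover have "3 / (pi^2 * e) * (2 * e / MM) = T1 * (3 / pi^2)" unfolding T1_def using e0 by simp
    ultimately show ?thesis unfolding K by simp
  qed
  have zero: "Pk S h a = 0" if "T2 < S" for S
  proof -
    have S0: "0 < S" using that T12 by simp
    have "2 < S * mm" using that m0 unfolding T2_def by (simp add: field_simps)
    moreover have "S * mm \<le> S * MM" using S0 M0 by (intro mult_left_mono) auto
    ultimately show ?thesis using cl[OF S0] unfolding pos_part_def by simp
  qed
  have "((\<lambda>S. if S \<in> {0..T2} then Pk S h a else 0) has_integral (3 / pi^2) * Kf a h) {0..}"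
    using i12 val T12 by (subst has_integral_restrict) auto
  then show ?thesis
    by (rule has_integral_eq[rotated]) (use zero in auto)
qed

lemma Kf_nonneg:
  assumes h: "\<bar>h\<bar> \<le> 1" and a: "\<bar>a\<bar> \<le> 1"
  shows "0 \<le> Kf a h"
proof (cases "mf h a = 0")
  case True then show ?thesis unfolding Kf_def by simp
next
  case False
  then have m: "0 < mf h a" using mf_nonneg[OF h a] by simp
  then have "1 \<le> Mf h a / mf h a" using mf_le_Mf[of h a] by simp
  then have "0 \<le> ln (Mf h a / mf h a)" by simp
  then show ?thesis unfolding Kf_def using ef_nonneg[of h a] by simp
qed

lemma mf_pos:
  assumes h: "\<bar>h\<bar> < 1" and a: "\<bar>a\<bar> \<le> 1"
  shows "0 < mf h a"
  using assms unfolding mf_def ef_def zf_def by (auto simp: abs_if field_simps split: if_splits)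

lemma ef_pos: "h \<noteq> a \<Longrightarrow> 0 < ef h a" unfolding ef_def by simp

lemma partC:
  assumes a: "-1 \<le> a" "a \<le> 1"
  shows "((\<lambda>(S, h). Pk S h a) has_integral 1) ({0..} \<times> {-1..1})"
proof -
  define g where "g x = (if 0 \<le> fst x \<and> -1 \<le> snd x \<and> snd x \<le> 1 then Pk (fst x) (snd x) a else 0)" for x :: "real \<times> real"
  have gm: "g \<in> borel_measurable borel"
  proof -
    have "g \<in> borel_measurable (borel \<Otimes>\<^sub>M borel)" unfolding g_def by measurable
    then show ?thesis by (simp add: borel_prod)
  qed
  have gm2: "(\<lambda>x. ennreal (g x)) \<in> borel_measurable (lborel \<Otimes>\<^sub>M lborel)" unfolding g_def by measurable
  have gnn: "0 \<le> g x" for x unfolding g_def using a by (auto intro!: Pk_nonneg)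
  have inner_eq: "(\<integral>\<^sup>+S. ennreal (g (S, h)) \<partial>lborel) = ennreal (indicator {-1..1} h * ((3 / pi^2) * Kf a h))"
    if h: "h \<noteq> a" "h \<noteq> -1" "h \<noteq> 1" for h
  proof (cases "h \<in> {-1..1}")
    case False
    then show ?thesis unfolding g_def by auto
  next
    case True
    then have h1: "\<bar>h\<bar> < 1" using h by auto
    have i: "((\<lambda>S. Pk S h a) has_integral (3 / pi^2) * Kf a h) {0..}"
      by (rule inner) (use h1 a h in \<open>auto intro!: ef_pos mf_pos\<close>)
    have "(\<integral>\<^sup>+S. ennreal (indicator {0..} S * Pk S h a) \<partial>lborel) = ennreal ((3 / pi^2) * Kf a h)"
      by (rule nn_integral_has_integral_lebesgue[OF _ i]) (use h1 a in \<open>auto intro!: Pk_nonneg\<close>)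
    moreover have "g (S, h) = indicator {0..} S * Pk S h a" for S unfolding g_def using True by auto
    ultimately show ?thesis using True by simp
  qed
  have ae: "AE h in lborel. h \<noteq> a \<and> h \<noteq> -1 \<and> h \<noteq> 1"
    using AE_lborel_singleton[of a] AE_lborel_singleton[of "-1"] AE_lborel_singleton[of 1]
    by eventually_elim auto
  have outer_i: "((\<lambda>h. (3 / pi^2) * Kf a h) has_integral (3 / pi^2) * (pi^2 / 3)) {-1..1}"
    by (rule has_integral_mult_right[OF outer[OF a]])
  have "(\<integral>\<^sup>+x. ennreal (g x) \<partial>lborel) = (\<integral>\<^sup>+x. ennreal (g x) \<partial>(lborel \<Otimes>\<^sub>M lborel))"
    by (simp only: lborel_prod)
  also have "\<dots> = (\<integral>\<^sup>+h. (\<integral>\<^sup>+S. ennreal (g (S, h)) \<partial>lborel) \<partial>lborel)"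
    by (rule lborel_pair.nn_integral_snd[symmetric, OF gm2])
  also have "\<dots> = (\<integral>\<^sup>+h. ennreal (indicator {-1..1} h * ((3 / pi^2) * Kf a h)) \<partial>lborel)"
    by (rule nn_integral_cong_AE) (use ae inner_eq in \<open>auto elim: AE_mp\<close>)
  also have "\<dots> = ennreal ((3 / pi^2) * (pi^2 / 3))"
  proof (rule nn_integral_has_integral_lebesgue[OF _ outer_i])
    fix h :: real assume "h \<in> {-1..1}"
    then have h: "\<bar>h\<bar> \<le> 1" by auto
    have "0 \<le> Kf a h" by (rule Kf_nonneg[OF h]) (use a in auto)
    then show "0 \<le> (3 / pi^2) * Kf a h" by (intro mult_nonneg_nonneg) auto
  qed
  also have "(3 / pi^2) * (pi^2 / 3) = (1::real)" by simp
  finally have int: "(\<integral>\<^sup>+x. ennreal (g x) \<partial>lborel) = ennreal 1" .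
  have gi: "(g has_integral 1) UNIV"
    by (rule nn_integral_has_integral[OF gm gnn int]) simp
  have geq: "g = (\<lambda>x. if x \<in> {0..} \<times> {-1..1} then (\<lambda>(S, h). Pk S h a) x else 0)"
    unfolding g_def by (auto simp: fun_eq_iff)
  have "((\<lambda>x. if x \<in> {0..} \<times> {-1..1} then (\<lambda>(S, h). Pk S h a) x else 0) has_integral 1) UNIV"
    using gi unfolding geq .
  then show ?thesis unfolding has_integral_restrict_UNIV .
qed

lemma Pk_cont: "continuous_on {x. 0 < fst x \<and> fst (snd x) \<noteq> snd (snd x)} (\<lambda>(S, h, h'). Pk S h h')"
  unfolding Pk_def Let_def pos_part_def case_prod_unfold
  by (intro continuous_intros) auto

lemma pieces_aux:
  fixes u v :: "real \<times> real \<times> real"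
  assumes u: "u \<noteq> 0" and v: "v \<noteq> 0"
  defines "C \<equiv> {x. u \<bullet> x \<ge> 0} \<inter> {x. v \<bullet> x \<ge> 0}"
  shows "closed C" "interior C = {x. u \<bullet> x > 0} \<inter> {x. v \<bullet> x > 0}" "negligible (frontier C)"
proof -
  show cl: "closed C" unfolding C_def by (intro closed_Int closed_halfspace_ge)
  show int: "interior C = {x. u \<bullet> x > 0} \<inter> {x. v \<bullet> x > 0}" unfolding C_def using u v by simp
  have "frontier C \<subseteq> {x. u \<bullet> x = 0} \<union> {x. v \<bullet> x = 0}"
    unfolding frontier_def closure_closed[OF cl] int unfolding C_def by auto
  moreover have "negligible ({x. u \<bullet> x = 0} \<union> {x. v \<bullet> x = 0})"
    using u v by (intro negligible_Un negligible_hyperplane) auto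
  ultimately show "negligible (frontier C)" by (rule negligible_subset[rotated])
qed

lemma partA: "piecewise_continuous_on ({0..} \<times> {-1..1} \<times> {-1..1}) (\<lambda>(S, h, h'). Pk S h h')"
proof -
  define u1 :: "real \<times> real \<times> real" where "u1 = (1, 0, 0)"
  define u2 :: "real \<times> real \<times> real" where "u2 = (0, -1, 1)"
  define u3 :: "real \<times> real \<times> real" where "u3 = (0, 1, -1)"
  have nz: "u1 \<noteq> 0" "u2 \<noteq> 0" "u3 \<noteq> 0" unfolding u1_def u2_def u3_def by (auto simp: zero_prod_def)
  have ip: "u1 \<bullet> x = fst x" "u2 \<bullet> x = snd (snd x) - fst (snd x)" "u3 \<bullet> x = fst (snd x) - snd (snd x)" for x
    unfolding u1_def u2_def u3_def by (cases x; auto)+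
  define C1 where "C1 = {x. u1 \<bullet> x \<ge> 0} \<inter> {x. u2 \<bullet> x \<ge> 0}"
  define C2 where "C2 = {x. u1 \<bullet> x \<ge> 0} \<inter> {x. u3 \<bullet> x \<ge> 0}"
  note p1 = pieces_aux[OF nz(1) nz(2), folded C1_def]
  note p2 = pieces_aux[OF nz(1) nz(3), folded C2_def]
  have cont: "continuous_on (D \<inter> interior C) (\<lambda>(S, h, h'). Pk S h h')"
    if "interior C = {x. u1 \<bullet> x > 0} \<inter> {x. v \<bullet> x > 0}"
       "\<And>x. v \<bullet> x > 0 \<Longrightarrow> fst (snd x) \<noteq> snd (snd x)" for D C v
    by (rule continuous_on_subset[OF Pk_cont]) (use that ip in auto)
  show ?thesis unfolding piecewise_continuous_on_def
  proof (intro exI[of _ "{C1, C2}"] conjI)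
    show "finite {C1, C2}" by simp
    show "{0..} \<times> {-1..1} \<times> {-1..1} \<subseteq> \<Union> {C1, C2}"
      unfolding C1_def C2_def ip by auto
    show "\<forall>C\<in>{C1, C2}. closed C \<and> negligible (frontier C) \<and>
          continuous_on ({0..} \<times> {-1..1} \<times> {-1..1} \<inter> interior C) (\<lambda>(S, h, h'). Pk S h h')"
      using p1 p2 by (auto simp: ip intro!: continuous_on_subset[OF Pk_cont])
  qed
qed

lemma Pk_swap: "Pk S h h' = Pk S h' h"
proof -
  have "\<bar>h + h'\<bar> = \<bar>h' + h\<bar>" "\<bar>h - h'\<bar> = \<bar>h' - h\<bar>" by (simp_all add: add.commute abs_minus_commute)
  then show ?thesis unfolding Pk_def Let_def by simp
qed

lemma Pk_neg: "Pk S h h' = Pk S (-h) (-h')"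
proof -
  have "\<bar>-h + -h'\<bar> = \<bar>h + h'\<bar>" "\<bar>-h - -h'\<bar> = \<bar>h - h'\<bar>" by linarith+
  then show ?thesis unfolding Pk_def Let_def by simp
qed

lemma partE:
  assumes S: "4 \<le> S" and h: "h \<in> {-1<..<1}" "h' \<in> {-1<..<1}" "\<bar>h'\<bar> \<le> h"
  shows "0 \<le> Pk S h h' \<and> Pk S h h' \<le> 6 / (pi^2 * S) * (if 1 + h' < 2 / S then 1 else 0)"
proof -
  have hh: "\<bar>h\<bar> \<le> 1" "\<bar>h'\<bar> \<le> 1" using h by auto
  have m: "mf h h' = 1 + h'" using h unfolding mf_def ef_def zf_def by (auto simp: abs_if field_simps split: if_splits)
  show ?thesis using Pk_nonneg[of S h h'] Pk_bound4[OF S hh] S hh unfolding m by auto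
qed

lemma box_cover:
  assumes S: "4 \<le> S" and h: "\<bar>h\<bar> \<le> 1" "\<bar>h'\<bar> \<le> 1" and m: "mf h h' < 2 / S"
  shows "(h, h') \<in> {-1..-(1 - 2/S)} \<times> {1 - 2/S..1} \<union> {1 - 2/S..1} \<times> {-1..-(1 - 2/S)}"
proof -
  define t where "t = 2 / S"
  have t: "t \<le> 1/2" unfolding t_def using S by (simp add: field_simps)
  have "1 + \<bar>h + h'\<bar>/2 - \<bar>h - h'\<bar>/2 < t" using m unfolding t_def mf_def zf_def ef_def .
  then show ?thesis using h t unfolding t_def[symmetric] by (auto simp: abs_if field_simps split: if_splits)
qed

lemma partF:
  assumes S: "4 \<le> S"
  shows "(\<lambda>(h, h'). Pk S h h') integrable_on ({-1..1} \<times> {-1..1}) \<and>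
         integral ({-1..1} \<times> {-1..1}) (\<lambda>(h, h'). Pk S h h') \<le> 48 / (pi^2 * S^3)"
proof -
  have S0: "0 < S" using S by simp
  define q where "q = 1 - 2 / S"
  define B where "B = {-1..-q} \<times> {q..1} \<union> {q..1} \<times> {-1..-q :: real}"
  define f where "f x = (if -1 \<le> fst x \<and> fst x \<le> 1 \<and> -1 \<le> snd x \<and> snd x \<le> 1 then Pk S (fst x) (snd x) else 0)" for x :: "real \<times> real"
  have fm: "f \<in> borel_measurable borel"
  proof -
    have "f \<in> borel_measurable (borel \<Otimes>\<^sub>M borel)" unfolding f_def by measurable
    then show ?thesis by (simp add: borel_prod)
  qed
  have fnn: "0 \<le> f x" for x unfolding f_def using S by (auto intro!: Pk_nonneg)
  have fle: "ennreal (f x) \<le> ennreal (6 / (pi^2 * S)) * indicator B x" for x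
  proof (cases "-1 \<le> fst x \<and> fst x \<le> 1 \<and> -1 \<le> snd x \<and> snd x \<le> 1")
    case False
    then have "f x = 0" unfolding f_def by metis
    then show ?thesis by simp
  next
    case inQ: True
    then have hh: "\<bar>fst x\<bar> \<le> 1" "\<bar>snd x\<bar> \<le> 1" by auto
    have b: "Pk S (fst x) (snd x) \<le> 6 / (pi^2 * S) * (if mf (fst x) (snd x) < 2 / S then 1 else 0)"
      by (rule Pk_bound4[OF S hh])
    show ?thesis
    proof (cases "mf (fst x) (snd x) < 2 / S")
      case True
      then have "x \<in> B" using box_cover[OF S hh True] unfolding B_def q_def by (cases x) auto
      then show ?thesis using b True inQ unfolding f_def by (auto intro!: ennreal_leI)
    next
      case False
      then have "f x \<le> 0" using b inQ unfolding f_def by simp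
      then have "f x = 0" using fnn[of x] by simp
      then show ?thesis by simp
    qed
  qed
  have q1: "q \<le> 1" "-1 \<le> -q" "2 / S \<ge> 0" unfolding q_def using S by auto
  have eB: "emeasure lborel B \<le> ennreal (8 / S^2)"
  proof -
    have box: "emeasure lborel (A1 \<times> A2) = emeasure lborel A1 * emeasure lborel A2"
      if "A1 \<in> sets borel" "A2 \<in> sets borel" for A1 A2 :: "real set"
      using lborel.emeasure_pair_measure_Times[where N=lborel and A=A1 and B=A2] that by (simp add: lborel_prod)
    have l1: "emeasure lborel {-1..-q} = ennreal (2 / S)" unfolding q_def using q1 by simp
    have l2: "emeasure lborel {q..1} = ennreal (2 / S)" unfolding q_def using q1 by simp
    have "emeasure lborel B \<le> emeasure lborel ({-1..-q} \<times> {q..1}) + emeasure lborel ({q..1} \<times> {-1..-q :: real})"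
      unfolding B_def by (rule emeasure_subadditive) (auto intro!: borel_closed closed_Times)
    also have "\<dots> = ennreal (2 / S) * ennreal (2 / S) + ennreal (2 / S) * ennreal (2 / S)"
      by (simp add: box l1 l2)
    also have "\<dots> = ennreal (8 / S^2)"
      using q1 by (simp add: ennreal_mult'[symmetric] ennreal_plus[symmetric] power2_eq_square del: ennreal_plus)
    finally show ?thesis .
  qed
  have "(\<integral>\<^sup>+x. ennreal (f x) \<partial>lborel) \<le> (\<integral>\<^sup>+x. ennreal (6 / (pi^2 * S)) * indicator B x \<partial>lborel)"
    by (rule nn_integral_mono) (rule fle)
  also have "\<dots> = ennreal (6 / (pi^2 * S)) * emeasure lborel B"
    by (rule nn_integral_cmult_indicator) (auto simp: B_def intro!: borel_closed closed_Times closed_Un)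
  also have "\<dots> \<le> ennreal (6 / (pi^2 * S)) * ennreal (8 / S^2)"
    by (rule mult_left_mono[OF eB]) simp
  also have "\<dots> = ennreal (48 / (pi^2 * S^3))"
    using S0 by (simp add: ennreal_mult'[symmetric] power2_eq_square power3_eq_cube)
  finally have le: "(\<integral>\<^sup>+x. ennreal (f x) \<partial>lborel) \<le> ennreal (48 / (pi^2 * S^3))" .
  then obtain r where r: "(\<integral>\<^sup>+x. ennreal (f x) \<partial>lborel) = ennreal r" "0 \<le> r"
    by (cases "\<integral>\<^sup>+x. ennreal (f x) \<partial>lborel" rule: ennreal_cases) (auto simp: top_unique)
  have rle: "r \<le> 48 / (pi^2 * S^3)" using le r S0 by (auto simp: ennreal_le_iff2 intro: order_trans[of _ 0])
  have fi: "(f has_integral r) UNIV" by (rule nn_integral_has_integral[OF fm fnn r])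
  have feq: "f = (\<lambda>x. if x \<in> {-1..1} \<times> {-1..1} then (\<lambda>(h, h'). Pk S h h') x else 0)"
    unfolding f_def by (auto simp: fun_eq_iff)
  have "((\<lambda>x. if x \<in> {-1..1} \<times> {-1..1} then (\<lambda>(h, h'). Pk S h h') x else 0) has_integral r) UNIV"
    using fi unfolding feq .
  then have "((\<lambda>(h, h'). Pk S h h') has_integral r) ({-1..1} \<times> {-1..1})"
    unfolding has_integral_restrict_UNIV .
  then show ?thesis using rle by (auto simp: has_integral_iff)
qed

theorem corollary2p2:
  shows "piecewise_continuous_on ({0..} \<times> {-1..1} \<times> {-1..1})
           (\<lambda>(S, h, h'). Pk S h h')
    \<and> (\<forall>S\<ge>0. \<exists>N::(real \<times> real) set. negligible N \<and>
          (\<forall>h h'. h \<in> {-1..1} \<and> h' \<in> {-1..1} \<and> (h, h') \<notin> N \<longrightarrow>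
             Pk S h h' = Pk S h' h \<and> Pk S h h' = Pk S (-h) (-h')))
    \<and> (\<forall>h'\<in>{-1..1}. ((\<lambda>(S, h). Pk S h h') has_integral 1) ({0..} \<times> {-1..1}))
    \<and> (\<forall>h\<in>{-1..1}. ((\<lambda>(S, h'). Pk S h h') has_integral 1) ({0..} \<times> {-1..1}))
    \<and> (\<forall>S\<ge>4. \<exists>N::(real \<times> real) set. negligible N \<and>
          (\<forall>h h'. h \<in> {-1<..<1} \<and> h' \<in> {-1<..<1} \<and> \<bar>h'\<bar> \<le> h \<and> (h, h') \<notin> N \<longrightarrow>
             0 \<le> Pk S h h' \<and>
             Pk S h h' \<le> 6 / (pi^2 * S) * (if 1 + h' < 2 / S then 1 else 0)))
    \<and> (\<forall>S\<ge>4. (\<lambda>(h, h'). Pk S h h') integrable_on ({-1..1} \<times> {-1..1}) \<and>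
          integral ({-1..1} \<times> {-1..1}) (\<lambda>(h, h'). Pk S h h') \<le> 48 / (pi^2 * S^3))"
proof (intro conjI)
  show "piecewise_continuous_on ({0..} \<times> {-1..1} \<times> {-1..1}) (\<lambda>(S, h, h'). Pk S h h')"
    by (rule partA)
  show "\<forall>S\<ge>0. \<exists>N::(real \<times> real) set. negligible N \<and>
          (\<forall>h h'. h \<in> {-1..1} \<and> h' \<in> {-1..1} \<and> (h, h') \<notin> N \<longrightarrow>
             Pk S h h' = Pk S h' h \<and> Pk S h h' = Pk S (-h) (-h'))"
    using Pk_swap Pk_neg by (auto intro!: exI[of _ "{}"])
  show "\<forall>h'\<in>{-1..1}. ((\<lambda>(S, h). Pk S h h') has_integral 1) ({0..} \<times> {-1..1})"
    using partC by auto
  show "\<forall>h\<in>{-1..1}. ((\<lambda>(S, h'). Pk S h h') has_integral 1) ({0..} \<times> {-1..1})"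
  proof
    fix h :: real assume h: "h \<in> {-1..1}"
    have eq: "(\<lambda>(S, h'). Pk S h h') = (\<lambda>(S, h'). Pk S h' h)" by (auto simp: fun_eq_iff Pk_swap[of _ h])
    show "((\<lambda>(S, h'). Pk S h h') has_integral 1) ({0..} \<times> {-1..1})"
      unfolding eq using partC[of h] h by auto
  qed
  show "\<forall>S\<ge>4. \<exists>N::(real \<times> real) set. negligible N \<and>
          (\<forall>h h'. h \<in> {-1<..<1} \<and> h' \<in> {-1<..<1} \<and> \<bar>h'\<bar> \<le> h \<and> (h, h') \<notin> N \<longrightarrow>
             0 \<le> Pk S h h' \<and>
             Pk S h h' \<le> 6 / (pi^2 * S) * (if 1 + h' < 2 / S then 1 else 0))"
    using partE by (auto intro!: exI[of _ "{}"])
  show "\<forall>S\<ge>4. (\<lambda>(h, h'). Pk S h h') integrable_on ({-1..1} \<times> {-1..1}) \<and>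
          integral ({-1..1} \<times> {-1..1}) (\<lambda>(h, h'). Pk S h h') \<le> 48 / (pi^2 * S^3)"
    using partF by auto
qed

end
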